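(* Let $G=Q_8=\langle i,j\mid i^4=j^4=j^{-1}iji=1,\ i^2=j^2\rangle$ and let $m\ge 3$. Let $\Delta$ be the graph with vertex set $G\times\{0,\dots,m-1\}$ (write $g_\ell=(g,\ell)$, $G_\ell=G\times\{\ell\}$) with the following edges: inside $G_0$, $\{g_0,(rg)_0\}$ for $r\in\{i,i^2,i^3\}$; inside $G_\ell$ for $\ell\in\{1,\dots,m-3\}$, $\{g_\ell,(i^2g)_\ell\}$; no edges inside $G_{m-2}$; inside $G_{m-1}$, $\{g_{m-1},(rg)_{m-1}\}$ for $r\in\{j,j^{-1}\}$; for $\ell\in\{0,\dots,m-3\}$ and $g\in G$, $g_\ell$ is adjacent to $g_{\ell+1}$ and to $(ig)_{\ell+1}$; for $g\in G$, $g_{m-2}$ is adjacent to $g_{m-1}$, $(ig)_{m-1}$ and $(jg)_{m-1}$; there are no other edges. Then, identifying $g\in G$ with the permutation $y_\ell\mapsto(yg)_\ell$, $\mathrm{Aut}(\Delta)=G$. Consequently $Q_8$ admits an $m$-GRR for every $m\ge 3$.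
   Context: An $m$-GRR for a group $G$ is a finite regular simple graph having a semiregular group of automorphisms isomorphic to $G$ with exactly $m$ vertex-orbits and whose full automorphism group is isomorphic to $G$. *)

theory Defs
  imports Main
begin

text \<open>The quaternion group Q8, realised concretely as the eight unit integer
quaternions (a,b,c,d) = a + b i + c j + d k with Hamilton multiplication.\<close>

type_synonym quat = "int \<times> int \<times> int \<times> int"

fun qmul :: "quat \<Rightarrow> quat \<Rightarrow> quat" (infixl "\<cdot>" 70) where
  "qmul (a1,b1,c1,d1) (a2,b2,c2,d2) =
     (a1*a2 - b1*b2 - c1*c2 - d1*d2,
      a1*b2 + b1*a2 + c1*d2 - d1*c2,
      a1*c2 - b1*d2 + c1*a2 + d1*b2,
      a1*d2 + b1*c2 - c1*b2 + d1*a2)"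

definition q1 :: quat where "q1 = (1,0,0,0)"
definition qi :: quat where "qi = (0,1,0,0)"
definition qj :: quat where "qj = (0,0,1,0)"

fun qinv :: "quat \<Rightarrow> quat" where
  "qinv (a,b,c,d) = (a,-b,-c,-d)"

definition Q8 :: "quat set" where
  "Q8 = {(1,0,0,0),(-1,0,0,0),(0,1,0,0),(0,-1,0,0),(0,0,1,0),(0,0,-1,0),(0,0,0,1),(0,0,0,-1)}"

definition verts :: "nat \<Rightarrow> (quat \<times> nat) set" where
  "verts m = Q8 \<times> {..<m}"

definition dedge :: "nat \<Rightarrow> quat \<times> nat \<Rightarrow> quat \<times> nat \<Rightarrow> bool" where
  "dedge m x y = (case x of (g,a) \<Rightarrow> case y of (h,b) \<Rightarrow>
      g \<in> Q8 \<and> a < m \<and>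
      ((a = 0 \<and> b = 0 \<and> h \<in> {qi \<cdot> g, qi \<cdot> qi \<cdot> g, qi \<cdot> qi \<cdot> qi \<cdot> g})
     \<or> (1 \<le> a \<and> a \<le> m - 3 \<and> b = a \<and> h = qi \<cdot> qi \<cdot> g)
     \<or> (a = m - 1 \<and> b = m - 1 \<and> h \<in> {qj \<cdot> g, qinv qj \<cdot> g})
     \<or> (a \<le> m - 3 \<and> b = a + 1 \<and> h \<in> {g, qi \<cdot> g})
     \<or> (a = m - 2 \<and> b = m - 1 \<and> h \<in> {g, qi \<cdot> g, qj \<cdot> g})))"

definition adj :: "nat \<Rightarrow> quat \<times> nat \<Rightarrow> quat \<times> nat \<Rightarrow> bool" where
  "adj m x y = (dedge m x y \<or> dedge m y x)"

definition is_aut :: "nat \<Rightarrow> (quat \<times> nat \<Rightarrow> quat \<times> nat) \<Rightarrow> bool" where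
  "is_aut m f = (bij_betw f (verts m) (verts m) \<and>
     (\<forall>x\<in>verts m. \<forall>y\<in>verts m. adj m x y \<longleftrightarrow> adj m (f x) (f y)))"

definition rmul :: "quat \<Rightarrow> quat \<times> nat \<Rightarrow> quat \<times> nat" where
  "rmul g v = (fst v \<cdot> g, snd v)"

definition degree :: "nat \<Rightarrow> quat \<times> nat \<Rightarrow> nat" where
  "degree m v = card {w \<in> verts m. adj m v w}"

end

theory Submission
  imports Defs
begin

lemma Q8_cases: "g \<in> Q8 \<longleftrightarrow> g = (1,0,0,0) \<or> g = (-1,0,0,0) \<or> g = (0,1,0,0) \<or> g = (0,-1,0,0) \<or> g = (0,0,1,0) \<or> g = (0,0,-1,0) \<or> g = (0,0,0,1) \<or> g = (0,0,0,-1)"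
  unfolding Q8_def by auto

lemma qmul_assoc: "(a \<cdot> b) \<cdot> c = a \<cdot> (b \<cdot> c)"
  by (cases a; cases b; cases c) (simp add: algebra_simps)

lemma Q8_mul: "g \<in> Q8 \<Longrightarrow> h \<in> Q8 \<Longrightarrow> g \<cdot> h \<in> Q8"
  unfolding Q8_cases by (elim disjE; simp)

lemma Q8_inv: "g \<in> Q8 \<Longrightarrow> qinv g \<in> Q8"
  unfolding Q8_cases by (elim disjE; simp)

lemma Q8_rinv: "g \<in> Q8 \<Longrightarrow> g \<cdot> qinv g = q1"
  unfolding Q8_cases q1_def by (elim disjE; simp)

lemma Q8_linv: "g \<in> Q8 \<Longrightarrow> qinv g \<cdot> g = q1"
  unfolding Q8_cases q1_def by (elim disjE; simp)

lemma q1_mul[simp]: "q1 \<cdot> g = g" "g \<cdot> q1 = g"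
  unfolding q1_def by (cases g; simp)+

lemma rcancel: "c \<in> Q8 \<Longrightarrow> (x \<cdot> c = y \<cdot> c) \<longleftrightarrow> x = y"
proof
  assume c: "c \<in> Q8" and e: "x \<cdot> c = y \<cdot> c"
  have "x \<cdot> c \<cdot> qinv c = y \<cdot> c \<cdot> qinv c" using e by simp
  thus "x = y" by (simp add: qmul_assoc Q8_rinv c)
qed simp

lemma qi_Q8[simp]: "qi \<in> Q8" and qj_Q8[simp]: "qj \<in> Q8" and q1_Q8[simp]: "q1 \<in> Q8"
  unfolding Q8_def qi_def qj_def q1_def by auto

definition Rin :: "nat \<Rightarrow> nat \<Rightarrow> quat set" where
  "Rin m a = (if a = 0 then {qi, qi \<cdot> qi, qi \<cdot> qi \<cdot> qi} else if a \<le> m - 3 then {qi \<cdot> qi}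
     else if a = m - 1 then {qj, qinv qj} else {})"

definition Rdn :: "nat \<Rightarrow> nat \<Rightarrow> quat set" where
  "Rdn m a = (if a \<le> m - 3 then {q1, qi} else if a = m - 2 then {q1, qi, qj} else {})"

lemma Rin_Q8: "r \<in> Rin m a \<Longrightarrow> r \<in> Q8"
  unfolding Rin_def by (auto split: if_splits simp: Q8_mul Q8_inv)

lemma Rdn_Q8: "r \<in> Rdn m a \<Longrightarrow> r \<in> Q8"
  unfolding Rdn_def by (auto split: if_splits)

lemma Rin_sym: "r \<in> Rin m a \<Longrightarrow> \<exists>s \<in> Rin m a. s \<cdot> r = q1"
  unfolding Rin_def q1_def qi_def qj_def by (auto split: if_splits)

lemma dedge_same: "m \<ge> 3 \<Longrightarrow> dedge m (g,a) (h,a) \<longleftrightarrow> g\<in>Q8 \<and> a<m \<and> (\<exists>r\<in>Rin m a. h = r \<cdot> g)"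
  unfolding dedge_def Rin_def by auto

lemma dedge_up: "m \<ge> 3 \<Longrightarrow> dedge m (g,a) (h,Suc a) \<longleftrightarrow> g\<in>Q8 \<and> a<m \<and> (\<exists>r\<in>Rdn m a. h = r \<cdot> g)"
  unfolding dedge_def Rdn_def by auto

lemma dedge_far: "b \<noteq> a \<Longrightarrow> b \<noteq> Suc a \<Longrightarrow> \<not> dedge m (g,a) (h,b)"
  unfolding dedge_def by auto

lemma in_sym:
  assumes "g \<in> Q8" "\<exists>r\<in>Rin m a. h = r \<cdot> g" shows "\<exists>r\<in>Rin m a. g = r \<cdot> h"
proof -
  obtain r where r: "r \<in> Rin m a" "h = r \<cdot> g" using assms by blast
  obtain s where s: "s \<in> Rin m a" "s \<cdot> r = q1" using Rin_sym[OF r(1)] by blast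
  have "s \<cdot> h = g" using r s by (simp add: qmul_assoc[symmetric])
  thus ?thesis using s by metis
qed

lemma adj_char:
  assumes m: "m \<ge> 3" and g: "g \<in> Q8" and a: "a < m" and h: "h \<in> Q8" and b: "b < m"
  shows "adj m (g,a) (h,b) \<longleftrightarrow> (b = a \<and> (\<exists>r\<in>Rin m a. h = r \<cdot> g))
     \<or> (b = Suc a \<and> (\<exists>r\<in>Rdn m a. h = r \<cdot> g)) \<or> (a = Suc b \<and> (\<exists>r\<in>Rdn m b. g = r \<cdot> h))"
proof (cases "b = a")
  case True
  have "adj m (g,a) (h,b) \<longleftrightarrow> (\<exists>r\<in>Rin m a. h = r \<cdot> g) \<or> (\<exists>r\<in>Rin m a. g = r \<cdot> h)"
    unfolding adj_def using True dedge_same[OF m] g h a by simp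
  also have "\<dots> \<longleftrightarrow> (\<exists>r\<in>Rin m a. h = r \<cdot> g)" using in_sym[OF g] in_sym[OF h] by blast
  finally show ?thesis using True by simp
next
  case False
  show ?thesis
  proof (cases "b = Suc a")
    case True
    then show ?thesis unfolding adj_def using dedge_up[OF m] dedge_far g a by auto
  next
    case F2: False
    show ?thesis
    proof (cases "a = Suc b")
      case True
      then show ?thesis unfolding adj_def using dedge_up[OF m] dedge_far h b by auto
    next
      case False
      then show ?thesis unfolding adj_def using dedge_far F2 \<open>b \<noteq> a\<close> by auto
    qed
  qed
qed


lemma in_verts[simp]: "(g,a) \<in> verts m \<longleftrightarrow> g \<in> Q8 \<and> a < m"
  unfolding verts_def by auto

lemma mul_rcancel': "c \<in> Q8 \<Longrightarrow> (h \<cdot> c = r \<cdot> (g \<cdot> c)) \<longleftrightarrow> h = r \<cdot> g"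
  by (simp add: qmul_assoc[symmetric] rcancel)

lemma rmul_adj:
  assumes m: "m \<ge> 3" and c: "c \<in> Q8" and x: "x \<in> verts m" and y: "y \<in> verts m"
  shows "adj m (rmul c x) (rmul c y) \<longleftrightarrow> adj m x y"
proof -
  obtain g a where xa: "x = (g,a)" by (cases x)
  obtain h b where yb: "y = (h,b)" by (cases y)
  have g: "g \<in> Q8" "a < m" and h: "h \<in> Q8" "b < m" using x y xa yb by auto
  show ?thesis unfolding xa yb rmul_def
    using adj_char[OF m g h]
      adj_char[OF m Q8_mul[OF g(1) c] g(2) Q8_mul[OF h(1) c] h(2)]
    by (simp add: mul_rcancel'[OF c])
qed

lemma rmul_verts: "c \<in> Q8 \<Longrightarrow> v \<in> verts m \<Longrightarrow> rmul c v \<in> verts m"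
  unfolding rmul_def verts_def by (auto simp: Q8_mul)

lemma rmul_rmul: "rmul c (rmul d v) = rmul (d \<cdot> c) v"
  unfolding rmul_def by (simp add: qmul_assoc)

lemma rmul_q1[simp]: "rmul q1 v = v"
  unfolding rmul_def by simp

lemma rmul_inv: "c \<in> Q8 \<Longrightarrow> rmul (qinv c) (rmul c v) = v"
  by (simp add: rmul_rmul Q8_rinv)

lemma rmul_inv2: "c \<in> Q8 \<Longrightarrow> rmul c (rmul (qinv c) v) = v"
  by (simp add: rmul_rmul Q8_linv)

lemma rmul_aut: assumes m: "m \<ge> 3" and c: "c \<in> Q8" shows "is_aut m (rmul c)"
  unfolding is_aut_def
proof
  show "bij_betw (rmul c) (verts m) (verts m)"
    by (rule bij_betw_byWitness[where f'="rmul (qinv c)"])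
       (auto simp: rmul_verts c Q8_inv rmul_inv rmul_inv2)
  show "\<forall>x\<in>verts m. \<forall>y\<in>verts m. adj m x y = adj m (rmul c x) (rmul c y)"
    using rmul_adj[OF m c] by simp
qed

lemma aut_verts: "is_aut m f \<Longrightarrow> v \<in> verts m \<Longrightarrow> f v \<in> verts m"
  unfolding is_aut_def using bij_betwE by blast

lemma aut_inj: "is_aut m f \<Longrightarrow> inj_on f (verts m)"
  unfolding is_aut_def using bij_betw_imp_inj_on by blast

lemma aut_adj: "is_aut m f \<Longrightarrow> x \<in> verts m \<Longrightarrow> y \<in> verts m \<Longrightarrow> adj m (f x) (f y) \<longleftrightarrow> adj m x y"
  unfolding is_aut_def by blast

lemma aut_comp: assumes f: "is_aut m f" and h: "is_aut m h" shows "is_aut m (h \<circ> f)"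
  unfolding is_aut_def
proof
  show "bij_betw (h \<circ> f) (verts m) (verts m)" using f h unfolding is_aut_def
    using bij_betw_trans by blast
  show "\<forall>x\<in>verts m. \<forall>y\<in>verts m. adj m x y = adj m ((h \<circ> f) x) ((h \<circ> f) y)"
    using aut_adj[OF f] aut_adj[OF h] aut_verts[OF f] by simp
qed

definition E :: "nat \<Rightarrow> nat \<Rightarrow> (quat \<times> nat) set" where
  "E m a = (\<lambda>r.(r,a)) ` Rin m a \<union> (\<lambda>r.(r,Suc a)) ` Rdn m a \<union>
     (if a = 0 then {} else (\<lambda>r.(qinv r, a - 1)) ` Rdn m (a-1))"

lemma Rdn_lt: "r \<in> Rdn m a \<Longrightarrow> m \<ge> 3 \<Longrightarrow> Suc a < m"
  unfolding Rdn_def by (auto split: if_splits)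

lemma inv_eq: "r \<in> Q8 \<Longrightarrow> h \<in> Q8 \<Longrightarrow> (q1 = r \<cdot> h) \<longleftrightarrow> h = qinv r"
  using rcancel[of r h "qinv r"]
  by (metis Q8_inv Q8_linv Q8_rinv qmul_assoc q1_mul)

lemma N1: assumes m: "m \<ge> 3" and a: "a < m"
  shows "{w \<in> verts m. adj m (q1,a) w} = E m a"
proof (intro set_eqI iffI)
  fix w assume "w \<in> {w \<in> verts m. adj m (q1,a) w}"
  then obtain h b where w: "w = (h,b)" "h \<in> Q8" "b < m" "adj m (q1,a) (h,b)" by (cases w) auto
  show "w \<in> E m a" using w adj_char[OF m q1_Q8 a w(2,3)] inv_eq[OF Rdn_Q8, of _ m _ h]
    unfolding E_def by auto
next
  fix w assume w: "w \<in> E m a"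
  have A: "adj m (q1,a) (h,b)" if "h \<in> Q8" "b < m" "(b = a \<and> h \<in> Rin m a) \<or> (b = Suc a \<and> h \<in> Rdn m a)
     \<or> (a = Suc b \<and> (\<exists>r\<in>Rdn m b. h = qinv r))" for h b
    using that adj_char[OF m q1_Q8 a that(1,2)] inv_eq[OF Rdn_Q8 that(1), of _ m b] by auto
  from w show "w \<in> {w \<in> verts m. adj m (q1,a) w}"
    unfolding E_def
  proof (elim UnE)
    assume "w \<in> (\<lambda>r. (r, a)) ` Rin m a" then obtain r where "r \<in> Rin m a" "w = (r,a)" by blast
    then show ?thesis using A[of r a] Rin_Q8 a by auto
  next
    assume "w \<in> (\<lambda>r. (r, Suc a)) ` Rdn m a" then obtain r where "r \<in> Rdn m a" "w = (r,Suc a)" by blast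
    then show ?thesis using A[of r "Suc a"] Rdn_Q8 Rdn_lt[OF _ m] by auto
  next
    assume "w \<in> (if a = 0 then {} else (\<lambda>r. (qinv r, a - 1)) ` Rdn m (a - 1))"
    then obtain r where "a \<noteq> 0" "r \<in> Rdn m (a-1)" "w = (qinv r,a-1)" by (auto split: if_splits)
    moreover have "qinv r \<in> Q8" using \<open>r \<in> Rdn m (a-1)\<close> Rdn_Q8 Q8_inv by blast
    moreover have "adj m (q1,a) (qinv r, a-1)"
      apply (rule A[of "qinv r" "a-1"])
      using calculation a apply simp_all
      apply (rule disjI2, rule disjI2) by auto
    ultimately show ?thesis using a by simp
  qed
qed

lemma Rin_0: "Rin m 0 = {qi, qi \<cdot> qi, qi \<cdot> qi \<cdot> qi}" unfolding Rin_def by simp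
lemma Rin_mid: "1 \<le> a \<Longrightarrow> a \<le> m - 3 \<Longrightarrow> Rin m a = {qi \<cdot> qi}" unfolding Rin_def by simp
lemma Rin_m2: "Suc (Suc a) = m \<Longrightarrow> m \<ge> 3 \<Longrightarrow> Rin m a = {}" unfolding Rin_def by auto
lemma Rin_m1: "Suc a = m \<Longrightarrow> m \<ge> 3 \<Longrightarrow> Rin m a = {qj, qinv qj}" unfolding Rin_def by auto
lemma Rdn_lo: "a \<le> m - 3 \<Longrightarrow> Rdn m a = {q1, qi}" unfolding Rdn_def by simp
lemma Rdn_m2: "Suc (Suc a) = m \<Longrightarrow> m \<ge> 3 \<Longrightarrow> Rdn m a = {q1, qi, qj}" unfolding Rdn_def by auto
lemma Rdn_m1: "Suc a = m \<Longrightarrow> m \<ge> 3 \<Longrightarrow> Rdn m a = {}" unfolding Rdn_def by auto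

lemma E_0: "m \<ge> 3 \<Longrightarrow> E m 0 = {((0,1,0,0),0),((-1,0,0,0),0),((0,-1,0,0),0),((1,0,0,0),1),((0,1,0,0),1)}"
  unfolding E_def by (simp add: Rin_0 Rdn_lo qi_def q1_def insert_commute)

lemma E_mid: "1 \<le> a \<Longrightarrow> a \<le> m - 3 \<Longrightarrow> m \<ge> 3 \<Longrightarrow> E m a = {((-1,0,0,0),a),((1,0,0,0),Suc a),((0,1,0,0),Suc a),((1,0,0,0),a-1),((0,-1,0,0),a-1)}"
  unfolding E_def by (simp add: Rin_mid Rdn_lo qi_def q1_def insert_commute)

lemma E_m2: "Suc (Suc a) = m \<Longrightarrow> m \<ge> 3 \<Longrightarrow> E m a = {((1,0,0,0),Suc a),((0,1,0,0),Suc a),((0,0,1,0),Suc a),((1,0,0,0),a-1),((0,-1,0,0),a-1)}"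
  unfolding E_def by (simp add: Rin_m2 Rdn_m2 Rdn_lo qi_def q1_def qj_def insert_commute)

lemma E_m1: "Suc a = m \<Longrightarrow> m \<ge> 3 \<Longrightarrow> E m a = {((0,0,1,0),a),((0,0,-1,0),a),((1,0,0,0),a-1),((0,-1,0,0),a-1),((0,0,-1,0),a-1)}"
proof -
  assume a: "Suc a = m" and m: "m \<ge> 3"
  have "Suc (Suc (a - 1)) = m" using a m by simp
  then show ?thesis using a m
  unfolding E_def by (simp add: Rin_m1 Rdn_m1 Rdn_m2 qi_def q1_def qj_def insert_commute)
qed

lemma card_E: "m \<ge> 3 \<Longrightarrow> a < m \<Longrightarrow> card (E m a) = 5"
proof -
  assume m: "m \<ge> 3" and a: "a < m"
  consider "a = 0" | "1 \<le> a \<and> a \<le> m - 3" | "Suc (Suc a) = m" | "Suc a = m" using m a by linarith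
  then show ?thesis
  proof cases
    case 1 then show ?thesis using E_0[OF m] by simp
  next
    case 2 then show ?thesis using E_mid[of a m] m by auto
  next
    case 3 then show ?thesis using E_m2[of a m] m by auto
  next
    case 4 then show ?thesis using E_m1[of a m] m by auto
  qed
qed

lemma nbr_rmul: assumes m: "m \<ge> 3" and g: "g \<in> Q8" and a: "a < m"
  shows "{w \<in> verts m. adj m (g,a) w} = rmul g ` {w \<in> verts m. adj m (q1,a) w}"
proof (intro set_eqI iffI)
  fix w assume w: "w \<in> {w \<in> verts m. adj m (g,a) w}"
  let ?w = "rmul (qinv g) w"
  have "?w \<in> verts m" using w rmul_verts Q8_inv g by auto
  moreover have "adj m (q1,a) ?w"
    using rmul_adj[OF m Q8_inv[OF g], of "(g,a)" w] w a g by (simp add: rmul_def Q8_rinv)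
  moreover have "w = rmul g ?w" using rmul_inv2[OF g] by simp
  ultimately show "w \<in> rmul g ` {w \<in> verts m. adj m (q1,a) w}" by blast
next
  fix w assume "w \<in> rmul g ` {w \<in> verts m. adj m (q1,a) w}"
  then obtain u where u: "u \<in> verts m" "adj m (q1,a) u" "w = rmul g u" by blast
  have "adj m (rmul g (q1,a)) (rmul g u)" using rmul_adj[OF m g, of "(q1,a)" u] u a by simp
  then show "w \<in> {w \<in> verts m. adj m (g,a) w}" using u rmul_verts[OF g] by (simp add: rmul_def)
qed

lemma rmul_inj: "c \<in> Q8 \<Longrightarrow> inj (rmul c)"
  unfolding inj_def by (metis rmul_inv)

lemma degree5: assumes m: "m \<ge> 3" and v: "v \<in> verts m" shows "degree m v = 5"
proof -
  obtain g a where va: "v = (g,a)" by (cases v)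
  have g: "g \<in> Q8" and a: "a < m" using v va by auto
  have "degree m v = card (rmul g ` {w \<in> verts m. adj m (q1,a) w})"
    unfolding degree_def va using nbr_rmul[OF m g a] by simp
  also have "\<dots> = card {w \<in> verts m. adj m (q1,a) w}"
    by (rule card_image) (rule inj_on_subset[OF rmul_inj[OF g]], simp)
  also have "\<dots> = 5" using N1[OF m a] card_E[OF m a] by simp
  finally show ?thesis .
qed

definition tri :: "nat \<Rightarrow> quat \<times> nat \<Rightarrow> bool" where
  "tri m v = (\<exists>x\<in>verts m. \<exists>y\<in>verts m. \<exists>z\<in>verts m. adj m v x \<and> adj m v y \<and> adj m v z
      \<and> adj m x y \<and> adj m y z \<and> adj m x z)"

lemma tri_aut: assumes f: "is_aut m f" and v: "v \<in> verts m" and t: "tri m v" shows "tri m (f v)"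
proof -
  obtain x y z where xyz: "x\<in>verts m" "y\<in>verts m" "z\<in>verts m" "adj m v x" "adj m v y" "adj m v z"
      "adj m x y" "adj m y z" "adj m x z" using t unfolding tri_def by blast
  show ?thesis unfolding tri_def
    apply (rule bexI[of _ "f x"], rule bexI[of _ "f y"], rule bexI[of _ "f z"])
    using xyz aut_adj[OF f] aut_verts[OF f] v by auto
qed

lemma tri_q1: assumes m: "m \<ge> 3" and g: "g \<in> Q8" and a: "a < m" and t: "tri m (g,a)" shows "tri m (q1,a)"
proof -
  have "tri m (rmul (qinv g) (g,a))" using tri_aut[OF rmul_aut[OF m Q8_inv[OF g]] _ t] g a by simp
  then show ?thesis by (simp add: rmul_def Q8_rinv g)
qed

lemma tri_0: assumes m: "m \<ge> 3" shows "tri m (q1,0)"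
  unfolding tri_def
  apply (rule bexI[of _ "(qi,0)"], rule bexI[of _ "(qi\<cdot>qi,0)"], rule bexI[of _ "(qi\<cdot>qi\<cdot>qi,0)"])
  using m by (simp_all add: adj_char Rin_0 qi_def q1_def Q8_def)

lemma Q8_elems[simp]: "(1,0,0,0) \<in> Q8" "(-1,0,0,0) \<in> Q8" "(0,1,0,0) \<in> Q8" "(0,-1,0,0) \<in> Q8"
  "(0,0,1,0) \<in> Q8" "(0,0,-1,0) \<in> Q8" "(0,0,0,1) \<in> Q8" "(0,0,0,-1) \<in> Q8"
  unfolding Q8_def by auto

lemma qc: "qi = (0,1,0,0)" "qj = (0,0,1,0)" "q1 = (1,0,0,0)"
  unfolding qi_def qj_def q1_def by auto

lemma Rin_lo: "b \<le> m - 3 \<Longrightarrow> (b = 0 \<and> Rin m b = {(0,1,0,0),(-1,0,0,0),(0,-1,0,0)}) \<or> (b \<noteq> 0 \<and> Rin m b = {(-1,0,0,0)})"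
  unfolding Rin_def qc by auto

lemma Rin_lo2: "1 \<le> b \<Longrightarrow> b \<le> m - 2 \<Longrightarrow> m \<ge> 3 \<Longrightarrow> Rin m b = {(-1,0,0,0)} \<or> Rin m b = {}"
  unfolding Rin_def qc by auto

lemma edges_i: assumes m: "m \<ge> 3" and a: "Suc b \<le> m - 3"
  and x: "x \<in> E m (Suc b)" and y: "y \<in> E m (Suc b)" and xy: "adj m x y"
  shows "(x,y) \<in> {(((1,0,0,0),b),((0,-1,0,0),b)), (((0,-1,0,0),b),((1,0,0,0),b))}"
proof -
  have Em: "E m (Suc b) = {((-1,0,0,0),Suc b),((1,0,0,0),Suc (Suc b)),((0,1,0,0),Suc (Suc b)),((1,0,0,0),b),((0,-1,0,0),b)}"
    using E_mid[of "Suc b" m] a m by simp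
  have R: "Rin m (Suc b) = {(-1,0,0,0)}" "Rdn m b = {(1,0,0,0),(0,1,0,0)}" "Rdn m (Suc b) = {(1,0,0,0),(0,1,0,0)}"
    using a by (simp_all add: Rin_mid Rdn_lo qc)
  have bb: "Suc b < m" "Suc (Suc b) < m" using a m by auto
  have RL: "(b = 0 \<and> Rin m b = {(0,1,0,0),(-1,0,0,0),(0,-1,0,0)}) \<or> (b \<noteq> 0 \<and> Rin m b = {(-1,0,0,0)})"
    using Rin_lo[of b m] a by simp
  have RL2: "Rin m (Suc (Suc b)) = {(-1,0,0,0)} \<or> Rin m (Suc (Suc b)) = {}"
    using Rin_lo2[of "Suc (Suc b)" m] a m by simp
  show ?thesis
  using x y xy RL RL2 R bb m unfolding Em
  apply (simp only: insert_iff empty_iff)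
  apply (elim disjE conjE)
  apply (simp_all add: adj_char)
  done
qed

lemma edges_ii: assumes m: "Suc (Suc (Suc b)) = m"
  and x: "x \<in> E m (Suc b)" and y: "y \<in> E m (Suc b)" and xy: "adj m x y"
  shows "(x,y) \<in> {(((1,0,0,0),b),((0,-1,0,0),b)), (((0,-1,0,0),b),((1,0,0,0),b)),
     (((1,0,0,0),Suc (Suc b)),((0,0,1,0),Suc (Suc b))), (((0,0,1,0),Suc (Suc b)),((1,0,0,0),Suc (Suc b)))}"
proof -
  have m3: "m \<ge> 3" using m by auto
  have Em: "E m (Suc b) = {((1,0,0,0),Suc (Suc b)),((0,1,0,0),Suc (Suc b)),((0,0,1,0),Suc (Suc b)),((1,0,0,0),b),((0,-1,0,0),b)}"
    using E_m2[of "Suc b" m] m by simp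
  have R: "Rin m (Suc b) = {}" "Rin m (Suc (Suc b)) = {(0,0,1,0),(0,0,-1,0)}" "Rdn m b = {(1,0,0,0),(0,1,0,0)}"
    "Rdn m (Suc b) = {(1,0,0,0),(0,1,0,0),(0,0,1,0)}"
    using m by (simp_all add: Rin_m2 Rin_m1 Rdn_lo Rdn_m2 qc)
  have RL: "(b = 0 \<and> Rin m b = {(0,1,0,0),(-1,0,0,0),(0,-1,0,0)}) \<or> (b \<noteq> 0 \<and> Rin m b = {(-1,0,0,0)})"
    using Rin_lo[of b m] m by simp
  have bb: "Suc b < m" "Suc (Suc b) < m" using m by auto
  show ?thesis
  using x y xy RL R bb m3 unfolding Em
  apply (simp only: insert_iff empty_iff)
  apply (elim disjE conjE)
  apply (simp_all add: adj_char)
  done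
qed

lemma edges_iii: assumes m: "Suc (Suc b) = m" "m \<ge> 3"
  and x: "x \<in> E m (Suc b)" and y: "y \<in> E m (Suc b)" and xy: "adj m x y"
  shows "(x,y) \<in> {(((0,0,1,0),Suc b),((1,0,0,0),b)), (((1,0,0,0),b),((0,0,1,0),Suc b)),
     (((0,0,-1,0),Suc b),((0,0,-1,0),b)), (((0,0,-1,0),b),((0,0,-1,0),Suc b))}"
proof -
  have Em: "E m (Suc b) = {((0,0,1,0),Suc b),((0,0,-1,0),Suc b),((1,0,0,0),b),((0,-1,0,0),b),((0,0,-1,0),b)}"
    using E_m1[of "Suc b" m] m by simp
  have R: "Rin m b = {}" "Rin m (Suc b) = {(0,0,1,0),(0,0,-1,0)}"
    "Rdn m b = {(1,0,0,0),(0,1,0,0),(0,0,1,0)}"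
    using m by (simp_all add: Rin_m2 Rin_m1 Rdn_m2 qc)
  have bb: "b < m" "Suc b < m" using m by auto
  show ?thesis
  using x y xy R bb m unfolding Em
  apply (simp only: insert_iff empty_iff)
  apply (elim disjE conjE)
  apply (simp_all add: adj_char)
  done
qed

lemma tri2: "(x,y) \<in> {(A,B),(B,A)} \<Longrightarrow> (y,z) \<in> {(A,B),(B,A)} \<Longrightarrow> (x,z) \<in> {(A,B),(B,A)} \<Longrightarrow> A \<noteq> B \<Longrightarrow> False"
  by auto

lemma tri4: "(x,y) \<in> {(A,B),(B,A),(C,D),(D,C)} \<Longrightarrow> (y,z) \<in> {(A,B),(B,A),(C,D),(D,C)} \<Longrightarrow> (x,z) \<in> {(A,B),(B,A),(C,D),(D,C)}
  \<Longrightarrow> A \<noteq> B \<Longrightarrow> C \<noteq> D \<Longrightarrow> A \<noteq> C \<Longrightarrow> A \<noteq> D \<Longrightarrow> B \<noteq> C \<Longrightarrow> B \<noteq> D \<Longrightarrow> False"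
  by auto

lemma notri: assumes m: "m \<ge> 3" and a: "1 \<le> a" "a < m" shows "\<not> tri m (q1,a)"
proof
  assume "tri m (q1,a)"
  then obtain x y z where v: "x\<in>verts m" "y\<in>verts m" "z\<in>verts m" "adj m (q1,a) x" "adj m (q1,a) y" "adj m (q1,a) z"
      and e: "adj m x y" "adj m y z" "adj m x z" unfolding tri_def by blast
  have xyz: "x \<in> E m a" "y \<in> E m a" "z \<in> E m a" using v N1[OF m a(2)] by blast+
  obtain b where b: "a = Suc b" using a by (cases a) auto
  consider "Suc b \<le> m - 3" | "Suc (Suc (Suc b)) = m" | "Suc (Suc b) = m" using a b m by linarith
  then show False
  proof cases
    case 1
    show False using tri2[OF edges_i[OF m 1, of x y] edges_i[OF m 1, of y z] edges_i[OF m 1, of x z]] xyz e b by simp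
  next
    case 2
    show False using tri4[OF edges_ii[OF 2, of x y] edges_ii[OF 2, of y z] edges_ii[OF 2, of x z]] xyz e b by simp
  next
    case 3
    show False using tri4[OF edges_iii[OF 3 m, of x y] edges_iii[OF 3 m, of y z] edges_iii[OF 3 m, of x z]] xyz e b by simp
  qed
qed

lemma tri_iff: assumes m: "m \<ge> 3" and v: "v \<in> verts m" shows "tri m v \<longleftrightarrow> snd v = 0"
proof -
  obtain g a where va: "v = (g,a)" by (cases v)
  have g: "g \<in> Q8" and a: "a < m" using v va by auto
  show ?thesis
  proof
    assume "tri m v"
    then have "tri m (q1,a)" using tri_q1[OF m g a] va by simp
    then show "snd v = 0" using notri[OF m _ a] va by (cases a) auto
  next
    assume "snd v = 0"
    then have "a = 0" using va by simp
    have "tri m (rmul g (q1,0))" using tri_aut[OF rmul_aut[OF m g] _ tri_0[OF m]] m by simp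
    then show "tri m v" using va \<open>a = 0\<close> by (simp add: rmul_def)
  qed
qed

lemma solve:
  fixes t s :: "quat \<Rightarrow> quat"
  assumes Q: "\<forall>x\<in>Q8. t x \<in> Q8 \<and> s x \<in> Q8"
  and S1: "\<forall>x\<in>Q8. t (qi \<cdot> x) = (0,1,0,0) \<cdot> s x"
  and S2a: "\<forall>x\<in>Q8. t x = s x \<or> t x = (0,0,1,0) \<cdot> s x"
  and S2b: "\<forall>x\<in>Q8. t (qj \<cdot> x) = s x \<or> t (qj \<cdot> x) = (0,0,1,0) \<cdot> s x"
  and S2c: "\<forall>x\<in>Q8. t x \<noteq> t (qj \<cdot> x)"
  and M: "\<forall>x\<in>Q8. s (qi \<cdot> x) = (0,1,0,0) \<cdot> s x \<or> s (qi \<cdot> x) = (0,-1,0,0) \<cdot> s x"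
  and T: "\<forall>x\<in>Q8. t (qj \<cdot> x) = (0,0,1,0) \<cdot> t x \<or> t (qj \<cdot> x) = (0,0,-1,0) \<cdot> t x"
  and t1: "t (1,0,0,0) = (1,0,0,0)"
  shows "\<forall>x\<in>Q8. t x = x \<and> s x = x"
proof -
  have S1_e1: "t (0,1,0,0) = (0,1,0,0) \<cdot> s (1,0,0,0)" using S1[rule_format, of "(1,0,0,0)"] by (simp add: qc)
  have S1_em1: "t (0,-1,0,0) = (0,1,0,0) \<cdot> s (-1,0,0,0)" using S1[rule_format, of "(-1,0,0,0)"] by (simp add: qc)
  have S1_ei: "t (-1,0,0,0) = (0,1,0,0) \<cdot> s (0,1,0,0)" using S1[rule_format, of "(0,1,0,0)"] by (simp add: qc)
  have S1_emi: "t (1,0,0,0) = (0,1,0,0) \<cdot> s (0,-1,0,0)" using S1[rule_format, of "(0,-1,0,0)"] by (simp add: qc)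
  have S1_ej: "t (0,0,0,1) = (0,1,0,0) \<cdot> s (0,0,1,0)" using S1[rule_format, of "(0,0,1,0)"] by (simp add: qc)
  have S1_emj: "t (0,0,0,-1) = (0,1,0,0) \<cdot> s (0,0,-1,0)" using S1[rule_format, of "(0,0,-1,0)"] by (simp add: qc)
  have S1_ek: "t (0,0,-1,0) = (0,1,0,0) \<cdot> s (0,0,0,1)" using S1[rule_format, of "(0,0,0,1)"] by (simp add: qc)
  have S1_emk: "t (0,0,1,0) = (0,1,0,0) \<cdot> s (0,0,0,-1)" using S1[rule_format, of "(0,0,0,-1)"] by (simp add: qc)
  have S2a_e1: "t (1,0,0,0) = s (1,0,0,0) \<or> t (1,0,0,0) = (0,0,1,0) \<cdot> s (1,0,0,0)" using S2a[rule_format, of "(1,0,0,0)"] by (simp add: qc)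
  have S2a_em1: "t (-1,0,0,0) = s (-1,0,0,0) \<or> t (-1,0,0,0) = (0,0,1,0) \<cdot> s (-1,0,0,0)" using S2a[rule_format, of "(-1,0,0,0)"] by (simp add: qc)
  have S2a_ei: "t (0,1,0,0) = s (0,1,0,0) \<or> t (0,1,0,0) = (0,0,1,0) \<cdot> s (0,1,0,0)" using S2a[rule_format, of "(0,1,0,0)"] by (simp add: qc)
  have S2a_emi: "t (0,-1,0,0) = s (0,-1,0,0) \<or> t (0,-1,0,0) = (0,0,1,0) \<cdot> s (0,-1,0,0)" using S2a[rule_format, of "(0,-1,0,0)"] by (simp add: qc)
  have S2a_ej: "t (0,0,1,0) = s (0,0,1,0) \<or> t (0,0,1,0) = (0,0,1,0) \<cdot> s (0,0,1,0)" using S2a[rule_format, of "(0,0,1,0)"] by (simp add: qc)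
  have S2a_emj: "t (0,0,-1,0) = s (0,0,-1,0) \<or> t (0,0,-1,0) = (0,0,1,0) \<cdot> s (0,0,-1,0)" using S2a[rule_format, of "(0,0,-1,0)"] by (simp add: qc)
  have S2a_ek: "t (0,0,0,1) = s (0,0,0,1) \<or> t (0,0,0,1) = (0,0,1,0) \<cdot> s (0,0,0,1)" using S2a[rule_format, of "(0,0,0,1)"] by (simp add: qc)
  have S2a_emk: "t (0,0,0,-1) = s (0,0,0,-1) \<or> t (0,0,0,-1) = (0,0,1,0) \<cdot> s (0,0,0,-1)" using S2a[rule_format, of "(0,0,0,-1)"] by (simp add: qc)
  have S2b_e1: "t (0,0,1,0) = s (1,0,0,0) \<or> t (0,0,1,0) = (0,0,1,0) \<cdot> s (1,0,0,0)" using S2b[rule_format, of "(1,0,0,0)"] by (simp add: qc)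
  have S2b_em1: "t (0,0,-1,0) = s (-1,0,0,0) \<or> t (0,0,-1,0) = (0,0,1,0) \<cdot> s (-1,0,0,0)" using S2b[rule_format, of "(-1,0,0,0)"] by (simp add: qc)
  have S2b_ei: "t (0,0,0,-1) = s (0,1,0,0) \<or> t (0,0,0,-1) = (0,0,1,0) \<cdot> s (0,1,0,0)" using S2b[rule_format, of "(0,1,0,0)"] by (simp add: qc)
  have S2b_emi: "t (0,0,0,1) = s (0,-1,0,0) \<or> t (0,0,0,1) = (0,0,1,0) \<cdot> s (0,-1,0,0)" using S2b[rule_format, of "(0,-1,0,0)"] by (simp add: qc)
  have S2b_ej: "t (-1,0,0,0) = s (0,0,1,0) \<or> t (-1,0,0,0) = (0,0,1,0) \<cdot> s (0,0,1,0)" using S2b[rule_format, of "(0,0,1,0)"] by (simp add: qc)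
  have S2b_emj: "t (1,0,0,0) = s (0,0,-1,0) \<or> t (1,0,0,0) = (0,0,1,0) \<cdot> s (0,0,-1,0)" using S2b[rule_format, of "(0,0,-1,0)"] by (simp add: qc)
  have S2b_ek: "t (0,1,0,0) = s (0,0,0,1) \<or> t (0,1,0,0) = (0,0,1,0) \<cdot> s (0,0,0,1)" using S2b[rule_format, of "(0,0,0,1)"] by (simp add: qc)
  have S2b_emk: "t (0,-1,0,0) = s (0,0,0,-1) \<or> t (0,-1,0,0) = (0,0,1,0) \<cdot> s (0,0,0,-1)" using S2b[rule_format, of "(0,0,0,-1)"] by (simp add: qc)
  have S2c_e1: "t (1,0,0,0) \<noteq> t (0,0,1,0)" using S2c[rule_format, of "(1,0,0,0)"] by (simp add: qc)
  have S2c_em1: "t (-1,0,0,0) \<noteq> t (0,0,-1,0)" using S2c[rule_format, of "(-1,0,0,0)"] by (simp add: qc)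
  have S2c_ei: "t (0,1,0,0) \<noteq> t (0,0,0,-1)" using S2c[rule_format, of "(0,1,0,0)"] by (simp add: qc)
  have S2c_emi: "t (0,-1,0,0) \<noteq> t (0,0,0,1)" using S2c[rule_format, of "(0,-1,0,0)"] by (simp add: qc)
  have S2c_ej: "t (0,0,1,0) \<noteq> t (-1,0,0,0)" using S2c[rule_format, of "(0,0,1,0)"] by (simp add: qc)
  have S2c_emj: "t (0,0,-1,0) \<noteq> t (1,0,0,0)" using S2c[rule_format, of "(0,0,-1,0)"] by (simp add: qc)
  have S2c_ek: "t (0,0,0,1) \<noteq> t (0,1,0,0)" using S2c[rule_format, of "(0,0,0,1)"] by (simp add: qc)
  have S2c_emk: "t (0,0,0,-1) \<noteq> t (0,-1,0,0)" using S2c[rule_format, of "(0,0,0,-1)"] by (simp add: qc)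
  have M_e1: "s (0,1,0,0) = (0,1,0,0) \<cdot> s (1,0,0,0) \<or> s (0,1,0,0) = (0,-1,0,0) \<cdot> s (1,0,0,0)" using M[rule_format, of "(1,0,0,0)"] by (simp add: qc)
  have M_em1: "s (0,-1,0,0) = (0,1,0,0) \<cdot> s (-1,0,0,0) \<or> s (0,-1,0,0) = (0,-1,0,0) \<cdot> s (-1,0,0,0)" using M[rule_format, of "(-1,0,0,0)"] by (simp add: qc)
  have M_ei: "s (-1,0,0,0) = (0,1,0,0) \<cdot> s (0,1,0,0) \<or> s (-1,0,0,0) = (0,-1,0,0) \<cdot> s (0,1,0,0)" using M[rule_format, of "(0,1,0,0)"] by (simp add: qc)
  have M_emi: "s (1,0,0,0) = (0,1,0,0) \<cdot> s (0,-1,0,0) \<or> s (1,0,0,0) = (0,-1,0,0) \<cdot> s (0,-1,0,0)" using M[rule_format, of "(0,-1,0,0)"] by (simp add: qc)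
  have M_ej: "s (0,0,0,1) = (0,1,0,0) \<cdot> s (0,0,1,0) \<or> s (0,0,0,1) = (0,-1,0,0) \<cdot> s (0,0,1,0)" using M[rule_format, of "(0,0,1,0)"] by (simp add: qc)
  have M_emj: "s (0,0,0,-1) = (0,1,0,0) \<cdot> s (0,0,-1,0) \<or> s (0,0,0,-1) = (0,-1,0,0) \<cdot> s (0,0,-1,0)" using M[rule_format, of "(0,0,-1,0)"] by (simp add: qc)
  have M_ek: "s (0,0,-1,0) = (0,1,0,0) \<cdot> s (0,0,0,1) \<or> s (0,0,-1,0) = (0,-1,0,0) \<cdot> s (0,0,0,1)" using M[rule_format, of "(0,0,0,1)"] by (simp add: qc)
  have M_emk: "s (0,0,1,0) = (0,1,0,0) \<cdot> s (0,0,0,-1) \<or> s (0,0,1,0) = (0,-1,0,0) \<cdot> s (0,0,0,-1)" using M[rule_format, of "(0,0,0,-1)"] by (simp add: qc)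
  have T_e1: "t (0,0,1,0) = (0,0,1,0) \<cdot> t (1,0,0,0) \<or> t (0,0,1,0) = (0,0,-1,0) \<cdot> t (1,0,0,0)" using T[rule_format, of "(1,0,0,0)"] by (simp add: qc)
  have T_em1: "t (0,0,-1,0) = (0,0,1,0) \<cdot> t (-1,0,0,0) \<or> t (0,0,-1,0) = (0,0,-1,0) \<cdot> t (-1,0,0,0)" using T[rule_format, of "(-1,0,0,0)"] by (simp add: qc)
  have T_ei: "t (0,0,0,-1) = (0,0,1,0) \<cdot> t (0,1,0,0) \<or> t (0,0,0,-1) = (0,0,-1,0) \<cdot> t (0,1,0,0)" using T[rule_format, of "(0,1,0,0)"] by (simp add: qc)
  have T_emi: "t (0,0,0,1) = (0,0,1,0) \<cdot> t (0,-1,0,0) \<or> t (0,0,0,1) = (0,0,-1,0) \<cdot> t (0,-1,0,0)" using T[rule_format, of "(0,-1,0,0)"] by (simp add: qc)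
  have T_ej: "t (-1,0,0,0) = (0,0,1,0) \<cdot> t (0,0,1,0) \<or> t (-1,0,0,0) = (0,0,-1,0) \<cdot> t (0,0,1,0)" using T[rule_format, of "(0,0,1,0)"] by (simp add: qc)
  have T_emj: "t (1,0,0,0) = (0,0,1,0) \<cdot> t (0,0,-1,0) \<or> t (1,0,0,0) = (0,0,-1,0) \<cdot> t (0,0,-1,0)" using T[rule_format, of "(0,0,-1,0)"] by (simp add: qc)
  have T_ek: "t (0,1,0,0) = (0,0,1,0) \<cdot> t (0,0,0,1) \<or> t (0,1,0,0) = (0,0,-1,0) \<cdot> t (0,0,0,1)" using T[rule_format, of "(0,0,0,1)"] by (simp add: qc)
  have T_emk: "t (0,-1,0,0) = (0,0,1,0) \<cdot> t (0,0,0,-1) \<or> t (0,-1,0,0) = (0,0,-1,0) \<cdot> t (0,0,0,-1)" using T[rule_format, of "(0,0,0,-1)"] by (simp add: qc)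
  have d_t_e1_0: "t (1,0,0,0) \<in> {(1,0,0,0)}" using t1 by (simp add: qc)
  have d_s_e1_0: "s (1,0,0,0) \<in> {(-1,0,0,0),(0,-1,0,0),(0,0,-1,0),(0,0,0,-1),(0,0,0,1),(0,0,1,0),(0,1,0,0),(1,0,0,0)}" using Q[rule_format, of "(1,0,0,0)"] by (auto simp: Q8_def)
  have d_t_em1_0: "t (-1,0,0,0) \<in> {(-1,0,0,0),(0,-1,0,0),(0,0,-1,0),(0,0,0,-1),(0,0,0,1),(0,0,1,0),(0,1,0,0),(1,0,0,0)}" using Q[rule_format, of "(-1,0,0,0)"] by (auto simp: Q8_def)
  have d_s_em1_0: "s (-1,0,0,0) \<in> {(-1,0,0,0),(0,-1,0,0),(0,0,-1,0),(0,0,0,-1),(0,0,0,1),(0,0,1,0),(0,1,0,0),(1,0,0,0)}" using Q[rule_format, of "(-1,0,0,0)"] by (auto simp: Q8_def)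
  have d_t_ei_0: "t (0,1,0,0) \<in> {(-1,0,0,0),(0,-1,0,0),(0,0,-1,0),(0,0,0,-1),(0,0,0,1),(0,0,1,0),(0,1,0,0),(1,0,0,0)}" using Q[rule_format, of "(0,1,0,0)"] by (auto simp: Q8_def)
  have d_s_ei_0: "s (0,1,0,0) \<in> {(-1,0,0,0),(0,-1,0,0),(0,0,-1,0),(0,0,0,-1),(0,0,0,1),(0,0,1,0),(0,1,0,0),(1,0,0,0)}" using Q[rule_format, of "(0,1,0,0)"] by (auto simp: Q8_def)
  have d_t_emi_0: "t (0,-1,0,0) \<in> {(-1,0,0,0),(0,-1,0,0),(0,0,-1,0),(0,0,0,-1),(0,0,0,1),(0,0,1,0),(0,1,0,0),(1,0,0,0)}" using Q[rule_format, of "(0,-1,0,0)"] by (auto simp: Q8_def)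
  have d_s_emi_0: "s (0,-1,0,0) \<in> {(-1,0,0,0),(0,-1,0,0),(0,0,-1,0),(0,0,0,-1),(0,0,0,1),(0,0,1,0),(0,1,0,0),(1,0,0,0)}" using Q[rule_format, of "(0,-1,0,0)"] by (auto simp: Q8_def)
  have d_t_ej_0: "t (0,0,1,0) \<in> {(-1,0,0,0),(0,-1,0,0),(0,0,-1,0),(0,0,0,-1),(0,0,0,1),(0,0,1,0),(0,1,0,0),(1,0,0,0)}" using Q[rule_format, of "(0,0,1,0)"] by (auto simp: Q8_def)
  have d_s_ej_0: "s (0,0,1,0) \<in> {(-1,0,0,0),(0,-1,0,0),(0,0,-1,0),(0,0,0,-1),(0,0,0,1),(0,0,1,0),(0,1,0,0),(1,0,0,0)}" using Q[rule_format, of "(0,0,1,0)"] by (auto simp: Q8_def)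
  have d_t_emj_0: "t (0,0,-1,0) \<in> {(-1,0,0,0),(0,-1,0,0),(0,0,-1,0),(0,0,0,-1),(0,0,0,1),(0,0,1,0),(0,1,0,0),(1,0,0,0)}" using Q[rule_format, of "(0,0,-1,0)"] by (auto simp: Q8_def)
  have d_s_emj_0: "s (0,0,-1,0) \<in> {(-1,0,0,0),(0,-1,0,0),(0,0,-1,0),(0,0,0,-1),(0,0,0,1),(0,0,1,0),(0,1,0,0),(1,0,0,0)}" using Q[rule_format, of "(0,0,-1,0)"] by (auto simp: Q8_def)
  have d_t_ek_0: "t (0,0,0,1) \<in> {(-1,0,0,0),(0,-1,0,0),(0,0,-1,0),(0,0,0,-1),(0,0,0,1),(0,0,1,0),(0,1,0,0),(1,0,0,0)}" using Q[rule_format, of "(0,0,0,1)"] by (auto simp: Q8_def)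
  have d_s_ek_0: "s (0,0,0,1) \<in> {(-1,0,0,0),(0,-1,0,0),(0,0,-1,0),(0,0,0,-1),(0,0,0,1),(0,0,1,0),(0,1,0,0),(1,0,0,0)}" using Q[rule_format, of "(0,0,0,1)"] by (auto simp: Q8_def)
  have d_t_emk_0: "t (0,0,0,-1) \<in> {(-1,0,0,0),(0,-1,0,0),(0,0,-1,0),(0,0,0,-1),(0,0,0,1),(0,0,1,0),(0,1,0,0),(1,0,0,0)}" using Q[rule_format, of "(0,0,0,-1)"] by (auto simp: Q8_def)
  have d_s_emk_0: "s (0,0,0,-1) \<in> {(-1,0,0,0),(0,-1,0,0),(0,0,-1,0),(0,0,0,-1),(0,0,0,1),(0,0,1,0),(0,1,0,0),(1,0,0,0)}" using Q[rule_format, of "(0,0,0,-1)"] by (auto simp: Q8_def)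
  have d_s_e1_1: "s (1,0,0,0) \<in> {(0,0,-1,0),(1,0,0,0)}" using d_s_e1_0 d_t_e1_0 S2a_e1 by auto
  have d_t_ej_2: "t (0,0,1,0) \<in> {(0,0,-1,0),(0,0,1,0),(1,0,0,0)}" using d_t_ej_0 d_s_e1_1 S2b_e1 by auto
  have d_t_ej_3: "t (0,0,1,0) \<in> {(0,0,-1,0),(0,0,1,0)}" using d_t_ej_2 d_t_e1_0 S2c_e1 by auto
  have d_s_ei_4: "s (0,1,0,0) \<in> {(0,-1,0,0),(0,0,0,-1),(0,0,0,1),(0,1,0,0)}" using d_s_ei_0 d_s_e1_1 M_e1 by auto
  have d_t_em1_5: "t (-1,0,0,0) \<in> {(-1,0,0,0),(0,0,-1,0),(0,0,1,0),(1,0,0,0)}" using d_t_em1_0 d_s_ei_4 S1_ei by auto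
  have d_t_ei_6: "t (0,1,0,0) \<in> {(0,-1,0,0),(0,0,0,-1),(0,0,0,1),(0,1,0,0)}" using d_t_ei_0 d_s_ei_4 S2a_ei by auto
  have d_t_emk_7: "t (0,0,0,-1) \<in> {(0,-1,0,0),(0,0,0,-1),(0,0,0,1),(0,1,0,0)}" using d_t_emk_0 d_s_ei_4 S2b_ei by auto
  have d_s_em1_8: "s (-1,0,0,0) \<in> {(-1,0,0,0),(0,0,-1,0),(0,0,1,0),(1,0,0,0)}" using d_s_em1_0 d_s_ei_4 M_ei by auto
  have d_s_emi_9: "s (0,-1,0,0) \<in> {(0,-1,0,0)}" using d_s_emi_0 d_t_e1_0 S1_emi by auto
  have d_t_emi_10: "t (0,-1,0,0) \<in> {(0,-1,0,0),(0,0,0,1)}" using d_t_emi_0 d_s_emi_9 S2a_emi by auto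
  have d_t_ek_11: "t (0,0,0,1) \<in> {(0,-1,0,0),(0,0,0,1)}" using d_t_ek_0 d_s_emi_9 S2b_emi by auto
  have d_s_e1_12: "s (1,0,0,0) \<in> {(1,0,0,0)}" using d_s_e1_1 d_s_emi_9 M_emi by auto
  have d_s_ej_13: "s (0,0,1,0) \<in> {(-1,0,0,0),(0,0,1,0)}" using d_s_ej_0 d_t_ek_11 S1_ej by auto
  have d_t_em1_14: "t (-1,0,0,0) \<in> {(-1,0,0,0),(0,0,-1,0),(0,0,1,0)}" using d_t_em1_5 d_s_ej_13 S2b_ej by auto
  have d_s_ek_15: "s (0,0,0,1) \<in> {(0,-1,0,0),(0,0,0,-1),(0,0,0,1),(0,1,0,0)}" using d_s_ek_0 d_s_ej_13 M_ej by auto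
  have d_t_em1_16: "t (-1,0,0,0) \<in> {(-1,0,0,0)}" using d_t_em1_14 d_t_ej_3 T_ej by auto
  have d_s_emj_17: "s (0,0,-1,0) \<in> {(-1,0,0,0),(0,0,-1,0),(0,0,1,0),(1,0,0,0)}" using d_s_emj_0 d_t_emk_7 S1_emj by auto
  have d_t_emj_18: "t (0,0,-1,0) \<in> {(-1,0,0,0),(0,0,-1,0),(0,0,1,0),(1,0,0,0)}" using d_t_emj_0 d_s_emj_17 S2a_emj by auto
  have d_s_emj_19: "s (0,0,-1,0) \<in> {(0,0,-1,0),(1,0,0,0)}" using d_s_emj_17 d_t_e1_0 S2b_emj by auto
  have d_t_emj_20: "t (0,0,-1,0) \<in> {(-1,0,0,0),(0,0,-1,0),(0,0,1,0)}" using d_t_emj_18 d_t_e1_0 S2c_emj by auto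
  have d_s_emk_21: "s (0,0,0,-1) \<in> {(0,-1,0,0),(0,0,0,-1),(0,0,0,1),(0,1,0,0)}" using d_s_emk_0 d_s_emj_19 M_emj by auto
  have d_t_emj_22: "t (0,0,-1,0) \<in> {(0,0,-1,0),(0,0,1,0)}" using d_t_emj_20 d_t_e1_0 T_emj by auto
  have d_s_ek_23: "s (0,0,0,1) \<in> {(0,0,0,-1),(0,0,0,1)}" using d_s_ek_15 d_t_emj_22 S1_ek by auto
  have d_s_emj_24: "s (0,0,-1,0) \<in> {(0,0,-1,0)}" using d_s_emj_19 d_s_ek_23 M_ek by auto
  have d_s_emk_25: "s (0,0,0,-1) \<in> {(0,0,0,-1),(0,0,0,1)}" using d_s_emk_21 d_t_ej_3 S1_emk by auto
  have d_s_ej_26: "s (0,0,1,0) \<in> {(0,0,1,0)}" using d_s_ej_13 d_s_emk_25 M_emk by auto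
  have d_t_ei_27: "t (0,1,0,0) \<in> {(0,1,0,0)}" using d_t_ei_6 d_s_e1_12 S1_e1 by auto
  have d_t_ej_28: "t (0,0,1,0) \<in> {(0,0,1,0)}" using d_t_ej_3 d_s_e1_12 S2b_e1 by auto
  have d_s_ei_29: "s (0,1,0,0) \<in> {(0,-1,0,0),(0,1,0,0)}" using d_s_ei_4 d_s_e1_12 M_e1 by auto
  have d_s_em1_30: "s (-1,0,0,0) \<in> {(-1,0,0,0),(0,0,1,0)}" using d_s_em1_8 d_t_emi_10 S1_em1 by auto
  have d_s_em1_31: "s (-1,0,0,0) \<in> {(-1,0,0,0)}" using d_s_em1_30 d_s_emi_9 M_em1 by auto
  have d_s_ei_32: "s (0,1,0,0) \<in> {(0,1,0,0)}" using d_s_ei_29 d_t_em1_16 S1_ei by auto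
  have d_t_emk_33: "t (0,0,0,-1) \<in> {(0,0,0,-1),(0,1,0,0)}" using d_t_emk_7 d_s_ei_32 S2b_ei by auto
  have d_t_emk_34: "t (0,0,0,-1) \<in> {(0,0,0,-1)}" using d_t_emk_33 d_t_ei_27 S2c_ei by auto
  have d_t_ek_35: "t (0,0,0,1) \<in> {(0,0,0,1)}" using d_t_ek_11 d_s_ej_26 S1_ej by auto
  have d_t_emj_36: "t (0,0,-1,0) \<in> {(0,0,-1,0)}" using d_t_emj_22 d_s_emj_24 S2a_emj by auto
  have d_s_ek_37: "s (0,0,0,1) \<in> {(0,0,0,1)}" using d_s_ek_23 d_t_emj_36 S1_ek by auto
  have d_s_emk_38: "s (0,0,0,-1) \<in> {(0,0,0,-1)}" using d_s_emk_25 d_t_ej_28 S1_emk by auto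
  have d_t_emi_39: "t (0,-1,0,0) \<in> {(0,-1,0,0)}" using d_t_emi_10 d_s_emk_38 S2b_emk by auto
  show ?thesis
  proof
    fix x assume "x \<in> Q8"
    then show "t x = x \<and> s x = x" unfolding Q8_cases using d_t_e1_0 d_s_e1_12 d_t_em1_16 d_s_em1_31 d_t_ei_27 d_s_ei_32 d_t_emi_39 d_s_emi_9 d_t_ej_28 d_s_ej_26 d_t_emj_36 d_s_emj_24 d_t_ek_35 d_s_ek_37 d_t_emk_34 d_s_emk_38 by (elim disjE) auto
  qed
qed

lemma finite_verts: "finite (verts m)"
  unfolding verts_def Q8_def by simp

lemma q1_Rdn: "k \<le> m - 2 \<Longrightarrow> q1 \<in> Rdn m k"
  unfolding Rdn_def by auto

lemma level_pres:
  assumes m: "m \<ge> 3" and f: "is_aut m f"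
  shows "\<forall>v\<in>verts m. snd (f v) = snd v"
proof -
  have "\<forall>v\<in>verts m. snd v = l \<longrightarrow> snd (f v) = l" for l
  proof (induction l rule: less_induct)
    case (less l)
    show ?case
    proof (intro ballI impI)
      fix v assume v: "v \<in> verts m" "snd v = l"
      show "snd (f v) = l"
      proof (cases l)
        case 0
        then show ?thesis using tri_iff[OF m v(1)] tri_iff[OF m aut_verts[OF f v(1)]] tri_aut[OF f v(1)] v by simp
      next
        case (Suc k)
        obtain g where vg: "v = (g, Suc k)" using v Suc by (cases v) auto
        have g: "g \<in> Q8" "Suc k < m" using v vg by auto
        have u: "(g,k) \<in> verts m" using g by simp
        have "\<exists>r\<in>Rdn m k. g = r \<cdot> g" using q1_Rdn[of k m] g by (intro bexI[of _ q1]) auto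
        then have "adj m (g,k) v" unfolding vg using adj_char[OF m g(1) _ g(1) g(2)] g by simp
        then have a: "adj m (f (g,k)) (f v)" using aut_adj[OF f u v(1)] by simp
        have fu: "snd (f (g,k)) = k" using less.IH[of k] Suc u by auto
        obtain h c where fv: "f v = (h,c)" by (cases "f v")
        obtain h' where fu': "f (g,k) = (h',k)" using fu by (cases "f (g,k)") auto
        have hc: "h \<in> Q8" "c < m" using aut_verts[OF f v(1)] fv by auto
        have h': "h' \<in> Q8" "k < m" using aut_verts[OF f u] fu' by auto
        have c: "c = k \<or> c = Suc k \<or> k = Suc c" using a adj_char[OF m h' hc] fv fu' by auto
        show ?thesis
        proof (rule ccontr)
          assume "snd (f v) \<noteq> l"
          then have ck: "c \<le> k" using c fv Suc by auto
          let ?S = "{w \<in> verts m. snd w \<le> k}"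
          have sub: "f ` ?S \<subseteq> ?S"
          proof
            fix y assume "y \<in> f ` ?S"
            then obtain w where w: "w \<in> ?S" "y = f w" by blast
            have "snd (f w) = snd w" using less.IH[of "snd w"] w Suc by auto
            then show "y \<in> ?S" using w aut_verts[OF f] by auto
          qed
          have "f ` ?S = ?S"
            by (rule endo_inj_surj) (use finite_verts sub inj_on_subset[OF aut_inj[OF f]] in auto)
          moreover have "f v \<in> ?S" using aut_verts[OF f v(1)] fv ck by auto
          ultimately obtain w where w: "w \<in> ?S" "f w = f v" by (metis (no_types, lifting) imageE)
          then have "w = v" using aut_inj[OF f] v(1) unfolding inj_on_def by auto
          then show False using w v Suc by auto
        qed
      qed
    qed
  qed
  then show ?thesis by blast
qed

lemma lev: assumes m: "m \<ge> 3" and f: "is_aut m f" and x: "x \<in> Q8" and a: "a < m"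
  shows "f (x,a) = (fst (f (x,a)), a)" "fst (f (x,a)) \<in> Q8"
proof -
  have v: "(x,a) \<in> verts m" using x a by simp
  have "snd (f (x,a)) = a" using level_pres[OF m f] v by auto
  then show "f (x,a) = (fst (f (x,a)), a)" by (metis prod.collapse)
  show "fst (f (x,a)) \<in> Q8" using aut_verts[OF f v] by (cases "f (x,a)") auto
qed

lemma adjF: assumes m: "m \<ge> 3" and f: "is_aut m f" and x: "x \<in> Q8" "a < m" and y: "y \<in> Q8" "b < m"
  shows "adj m (x,a) (y,b) \<longleftrightarrow> adj m (fst (f (x,a)), a) (fst (f (y,b)), b)"
  using aut_adj[OF f, of "(x,a)" "(y,b)"] lev[OF m f x] lev[OF m f y] x y by simp

lemma adj_top: assumes m: "m \<ge> 3" and p: "p \<in> Q8" and q: "q \<in> Q8"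
  shows "adj m (p,m-1) (q,m-1) \<longleftrightarrow> q = qj \<cdot> p \<or> q = qinv qj \<cdot> p"
proof -
  have "Rin m (m-1) = {qj, qinv qj}" using Rin_m1[of "m-1" m] m by simp
  then show ?thesis using adj_char[OF m p _ q, of "m-1" "m-1"] m by auto
qed

lemma adj_m2: assumes m: "m \<ge> 3" and p: "p \<in> Q8" and q: "q \<in> Q8"
  shows "adj m (p,m-2) (q,m-1) \<longleftrightarrow> q = p \<or> q = qi \<cdot> p \<or> q = qj \<cdot> p"
proof -
  have "Rdn m (m-2) = {q1, qi, qj}" using Rdn_m2[of "m-2" m] m by simp
  moreover have "m - 1 = Suc (m - 2)" using m by simp
  ultimately show ?thesis using adj_char[OF m p _ q, of "m-2" "m-1"] m by auto
qed

lemma adj_lo: assumes m: "m \<ge> 3" and p: "p \<in> Q8" and q: "q \<in> Q8" and a: "a \<le> m - 3"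
  shows "adj m (p,a) (q,Suc a) \<longleftrightarrow> q = p \<or> q = qi \<cdot> p"
proof -
  have "Rdn m a = {q1, qi}" using Rdn_lo[OF a] by simp
  then show ?thesis using adj_char[OF m p _ q, of a "Suc a"] m a by auto
qed

lemma fl_top: assumes s: "\<sigma> \<in> Q8" and abc: "a \<in> {\<sigma>, qi \<cdot> \<sigma>, qj \<cdot> \<sigma>}" "b \<in> {\<sigma>, qi \<cdot> \<sigma>, qj \<cdot> \<sigma>}" "c \<in> {\<sigma>, qi \<cdot> \<sigma>, qj \<cdot> \<sigma>}"
  and d: "a \<noteq> b" "b \<noteq> c" "a \<noteq> c"
  and n: "\<not> (a = qj \<cdot> b \<or> a = qinv qj \<cdot> b)" "\<not> (c = qj \<cdot> b \<or> c = qinv qj \<cdot> b)"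
  shows "b = qi \<cdot> \<sigma> \<and> (a = \<sigma> \<or> a = qj \<cdot> \<sigma>) \<and> (c = \<sigma> \<or> c = qj \<cdot> \<sigma>)"
  using s abc d n unfolding Q8_cases qc insert_iff empty_iff
  by (elim disjE; simp)

lemma fl_M: assumes r: "r \<in> Q8" and ab: "a = r \<or> a = qi \<cdot> r" "b = r \<or> b = qi \<cdot> r" and d: "a \<noteq> b"
  shows "b = (0,1,0,0) \<cdot> a \<or> b = (0,-1,0,0) \<cdot> a"
  using r ab d unfolding Q8_cases qc by (elim disjE; simp)

lemma fl_down: assumes r: "r \<in> Q8" and ab: "x = r \<or> x = qi \<cdot> r" "qi \<cdot> x = r \<or> qi \<cdot> x = qi \<cdot> r"
  shows "r = x"
  using r ab unfolding Q8_cases qc by (elim disjE; simp)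

lemma na1: "x \<in> Q8 \<Longrightarrow> \<not> (x = qj \<cdot> (qi \<cdot> x) \<or> x = qinv qj \<cdot> (qi \<cdot> x))"
  unfolding Q8_cases qc by (elim disjE; simp)
lemma na2: "x \<in> Q8 \<Longrightarrow> \<not> (qj \<cdot> x = qj \<cdot> (qi \<cdot> x) \<or> qj \<cdot> x = qinv qj \<cdot> (qi \<cdot> x))"
  unfolding Q8_cases qc by (elim disjE; simp)
lemma nd: "x \<in> Q8 \<Longrightarrow> x \<noteq> qi \<cdot> x" "x \<in> Q8 \<Longrightarrow> x \<noteq> qj \<cdot> x" "x \<in> Q8 \<Longrightarrow> qi \<cdot> x \<noteq> qj \<cdot> x"
  unfolding Q8_cases qc by (elim disjE; simp)+

lemma fix_aut:
  assumes m: "m \<ge> 3" and f: "is_aut m f" and f1: "f (q1, m-1) = (q1, m-1)"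
  shows "\<forall>v\<in>verts m. f v = v"
proof -
  define F where "F a x = fst (f (x,a))" for a x
  have Fv: "f (x,a) = (F a x, a)" if "x \<in> Q8" "a < m" for x a
    using lev(1)[OF m f that] unfolding F_def .
  have FQ: "F a x \<in> Q8" if "x \<in> Q8" "a < m" for x a
    using lev(2)[OF m f that] unfolding F_def .
  have FA: "adj m (x,a) (y,b) \<longleftrightarrow> adj m (F a x, a) (F b y, b)" if "x \<in> Q8" "a < m" "y \<in> Q8" "b < m" for x y a b
    using adjF[OF m f that] unfolding F_def .
  have Finj: "F a x \<noteq> F a y" if "x \<in> Q8" "y \<in> Q8" "a < m" "x \<noteq> y" for x y a
  proof
    assume "F a x = F a y"
    then have "f (x,a) = f (y,a)" using Fv that by simp
    moreover have "(x,a) \<in> verts m" "(y,a) \<in> verts m" using that by auto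
    ultimately have "(x,a) = (y,a)" using inj_onD[OF aut_inj[OF f]] by blast
    then show False using that by simp
  qed
  have lv: "m - 1 < m" "m - 2 < m" "m - 3 < m" using m by auto
  define t where "t = F (m-1)"
  define s where "s = F (m-2)"
  have Q: "\<forall>x\<in>Q8. t x \<in> Q8 \<and> s x \<in> Q8" unfolding t_def s_def using FQ lv by auto
  have T: "\<forall>x\<in>Q8. t (qj \<cdot> x) = (0,0,1,0) \<cdot> t x \<or> t (qj \<cdot> x) = (0,0,-1,0) \<cdot> t x"
  proof
    fix x assume x: "x \<in> Q8"
    have jx: "qj \<cdot> x \<in> Q8" using x Q8_mul by simp
    have "adj m (x, m-1) (qj \<cdot> x, m-1)" using adj_top[OF m x jx] by simp
    then have "adj m (t x, m-1) (t (qj \<cdot> x), m-1)" using FA[OF x lv(1) jx lv(1)] unfolding t_def by simp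
    then show "t (qj \<cdot> x) = (0,0,1,0) \<cdot> t x \<or> t (qj \<cdot> x) = (0,0,-1,0) \<cdot> t x"
      using adj_top[OF m] Q x jx by (simp add: qc)
  qed
  have S: "t (qi \<cdot> x) = qi \<cdot> s x \<and> (t x = s x \<or> t x = qj \<cdot> s x) \<and> (t (qj \<cdot> x) = s x \<or> t (qj \<cdot> x) = qj \<cdot> s x)
     \<and> t x \<noteq> t (qj \<cdot> x)" if x: "x \<in> Q8" for x
  proof -
    have ix: "qi \<cdot> x \<in> Q8" and jx: "qj \<cdot> x \<in> Q8" using x Q8_mul by simp_all
    have e: "m - 1 = Suc (m - 2)" using m by simp
    have A: "t y \<in> {s x, qi \<cdot> s x, qj \<cdot> s x}" if "y \<in> {x, qi \<cdot> x, qj \<cdot> x}" for y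
    proof -
      have y: "y \<in> Q8" using that x ix jx by auto
      have "adj m (x, m-2) (y, m-1)" using adj_m2[OF m x y] that by auto
      then have "adj m (s x, m-2) (t y, m-1)" using FA[OF x lv(2) y lv(1)] unfolding t_def s_def by simp
      then show ?thesis using adj_m2[OF m] Q x y by auto
    qed
    have d: "t x \<noteq> t (qi \<cdot> x)" "t (qi \<cdot> x) \<noteq> t (qj \<cdot> x)" "t x \<noteq> t (qj \<cdot> x)"
      unfolding t_def using Finj[OF x ix lv(1)] Finj[OF ix jx lv(1)] Finj[OF x jx lv(1)] nd x by auto
    have "\<not> adj m (qi \<cdot> x, m-1) (x, m-1)" using adj_top[OF m ix x] na1[OF x] by simp
    then have n1: "\<not> (t x = qj \<cdot> t (qi \<cdot> x) \<or> t x = qinv qj \<cdot> t (qi \<cdot> x))"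
      using FA[OF ix lv(1) x lv(1)] adj_top[OF m] Q x ix unfolding t_def by simp
    have "\<not> adj m (qi \<cdot> x, m-1) (qj \<cdot> x, m-1)" using adj_top[OF m ix jx] na2[OF x] by simp
    then have n2: "\<not> (t (qj \<cdot> x) = qj \<cdot> t (qi \<cdot> x) \<or> t (qj \<cdot> x) = qinv qj \<cdot> t (qi \<cdot> x))"
      using FA[OF ix lv(1) jx lv(1)] adj_top[OF m] Q ix jx unfolding t_def by simp
    have "t (qi \<cdot> x) = qi \<cdot> s x \<and> (t x = s x \<or> t x = qj \<cdot> s x) \<and> (t (qj \<cdot> x) = s x \<or> t (qj \<cdot> x) = qj \<cdot> s x)"
      by (rule fl_top[OF _ A A A d(1) d(2) d(3) n1 n2]) (use Q x in auto)
    then show ?thesis using d by simp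
  qed
  have M: "\<forall>x\<in>Q8. s (qi \<cdot> x) = (0,1,0,0) \<cdot> s x \<or> s (qi \<cdot> x) = (0,-1,0,0) \<cdot> s x"
  proof
    fix x assume x: "x \<in> Q8"
    have ix: "qi \<cdot> x \<in> Q8" using x Q8_mul by simp
    have e: "Suc (m - 3) = m - 2" using m by simp
    have r: "F (m-3) x \<in> Q8" using FQ[OF x lv(3)] .
    have B: "s y = F (m-3) x \<or> s y = qi \<cdot> F (m-3) x" if "y = x \<or> y = qi \<cdot> x" for y
    proof -
      have y: "y \<in> Q8" using that x ix by auto
      have "adj m (x, m-3) (y, Suc (m-3))" using adj_lo[OF m x y] that by auto
      then have "adj m (F (m-3) x, m-3) (s y, Suc (m-3))" using FA[OF x lv(3) y] e lv unfolding s_def by simp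
      then show ?thesis using adj_lo[OF m r] Q y by auto
    qed
    have d: "s x \<noteq> s (qi \<cdot> x)" unfolding s_def using Finj[OF x ix lv(2)] nd x by auto
    show "s (qi \<cdot> x) = (0,1,0,0) \<cdot> s x \<or> s (qi \<cdot> x) = (0,-1,0,0) \<cdot> s x"
      by (rule fl_M[OF r B B d]) auto
  qed
  have t1: "t (1,0,0,0) = (1,0,0,0)" using f1 Fv[OF q1_Q8 lv(1)] unfolding t_def qc by simp
  have sol: "\<forall>x\<in>Q8. t x = x \<and> s x = x"
    apply (rule solve[OF Q _ _ _ _ M T t1])
    using S by (simp_all add: qc)
  have t_id: "F (m-1) x = x" and s_id: "F (m-2) x = x" if "x \<in> Q8" for x
    using sol that unfolding t_def s_def by auto
  have down: "\<forall>x\<in>Q8. F (m - 1 - d) x = x" if "d < m" for d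
    using that
  proof (induction d)
    case 0 then show ?case using t_id by simp
  next
    case (Suc e)
    note IH = Suc.IH and elt = Suc.prems
    show ?case
    proof (cases e)
      case 0
      have "m - 1 - Suc e = m - 2" using 0 by simp
      then show ?thesis using s_id by simp
    next
      case (Suc e')
      let ?a = "m - 1 - Suc e"
      have a: "?a \<le> m - 3" "Suc ?a = m - 1 - e" "?a < m" using Suc elt by auto
      have IH': "\<forall>x\<in>Q8. F (Suc ?a) x = x" using IH elt a(2) by simp
      show ?thesis
      proof
        fix x assume x: "x \<in> Q8"
        have ix: "qi \<cdot> x \<in> Q8" using x Q8_mul by simp
        have r: "F ?a x \<in> Q8" using FQ[OF x a(3)] .
        have sa: "Suc ?a < m" using a(2) m by linarith
        have "adj m (x, ?a) (y, Suc ?a)" if "y = x \<or> y = qi \<cdot> x" "y \<in> Q8" for y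
          using adj_lo[OF m x that(2) a(1)] that by auto
        moreover have "F (Suc ?a) y = y" if "y \<in> Q8" for y using IH' that by blast
        ultimately have "adj m (F ?a x, ?a) (y, Suc ?a)" if "y = x \<or> y = qi \<cdot> x" "y \<in> Q8" for y
          using FA[OF x a(3) that(2) sa] that by simp
        then have "x = F ?a x \<or> x = qi \<cdot> F ?a x" "qi \<cdot> x = F ?a x \<or> qi \<cdot> x = qi \<cdot> F ?a x"
          using adj_lo[OF m r _ a(1)] x ix by auto
        then show "F ?a x = x" using fl_down[OF r] by blast
      qed
    qed
  qed
  show ?thesis
  proof
    fix v assume v: "v \<in> verts m"
    obtain x a where va: "v = (x,a)" by (cases v)
    have x: "x \<in> Q8" "a < m" using v va by auto
    have "m - 1 - (m - 1 - a) = a" using x by simp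
    then have "F a x = x" using down[of "m - 1 - a"] x by force
    then show "f v = v" using Fv[OF x] va by simp
  qed
qed

theorem lemma4p11:
  fixes m :: nat
  assumes "m \<ge> 3"
  shows "(\<forall>f. is_aut m f \<longrightarrow> (\<exists>g\<in>Q8. \<forall>v\<in>verts m. f v = rmul g v))
       \<and> (\<forall>g\<in>Q8. is_aut m (rmul g))
       \<and> (\<forall>g\<in>Q8. \<forall>h\<in>Q8. (\<forall>v\<in>verts m. rmul g v = rmul h v) \<longrightarrow> g = h)
       \<and> (\<forall>v\<in>verts m. \<forall>w\<in>verts m. degree m v = degree m w)"
proof (intro conjI allI impI ballI)
  have m: "m \<ge> 3" by fact
  have lv: "m - 1 < m" using m by simp
  fix f assume f: "is_aut m f"
  define g where "g = fst (f (q1, m-1))"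
  have fg: "f (q1, m-1) = (g, m-1)" and g: "g \<in> Q8"
    using lev[OF m f q1_Q8 lv] unfolding g_def by auto
  let ?f = "rmul (qinv g) \<circ> f"
  have f': "is_aut m ?f" using aut_comp[OF f rmul_aut[OF m Q8_inv[OF g]]] .
  have "?f (q1, m-1) = (q1, m-1)" using fg by (simp add: rmul_def Q8_rinv g)
  then have fx: "\<forall>v\<in>verts m. ?f v = v" using fix_aut[OF m f'] by blast
  show "\<exists>g\<in>Q8. \<forall>v\<in>verts m. f v = rmul g v"
  proof (intro bexI[OF _ g] ballI)
    fix v assume "v \<in> verts m"
    then have "rmul (qinv g) (f v) = v" using fx by simp
    then have "rmul g (rmul (qinv g) (f v)) = rmul g v" by simp
    then show "f v = rmul g v" using rmul_inv2[OF g] by simp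
  qed
next
  fix g :: quat assume "g \<in> Q8"
  then show "is_aut m (rmul g)" using rmul_aut assms by blast
next
  fix g h :: quat assume "g \<in> Q8" "h \<in> Q8" "\<forall>v\<in>verts m. rmul g v = rmul h v"
  then have "rmul g (q1, 0) = rmul h (q1, 0)" using assms by simp
  then show "g = h" by (simp add: rmul_def)
next
  fix v w assume "v \<in> verts m" "w \<in> verts m"
  then show "degree m v = degree m w" using degree5 assms by simp
qed

end
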